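(* For the system (depending on the parameter $\alpha$) $$(u_{0,0}-u_{1,1})(v_{1,0}-v_{0,1})-\alpha+\beta=0,\qquad (v_{0,0}-v_{1,1})(u_{1,0}-u_{0,1})-\alpha+\beta=0,$$ the following is an extended symmetry: $$\frac{\partial u_{0,0}}{\partial \tau}=\frac{n}{v_{1,0}-v_{-1,0}},\qquad \frac{\partial v_{0,0}}{\partial \tau}=\frac{n}{u_{1,0}-u_{-1,0}},\qquad \frac{\partial\alpha}{\partial\tau}=-1.$$
   Context: Unknowns $u,v$ on $\mathbb Z^2$, $u_{i,j}=u(n+i,m+j)$, similarly $v$; $\alpha\neq\beta$ constants. Shifts $\mathcal S:n\mapsto n+1$, $\mathcal T:m\mapsto m+1$. For a system $\boldsymbol Q(\boldsymbol u_{0,0},\boldsymbol u_{1,0},\boldsymbol u_{0,1},\boldsymbol u_{1,1};\alpha)=\boldsymbol 0$ with $\boldsymbol u=(u,v)$ and Jacobians $\mathrm Q_{(p,q)}=\partial\boldsymbol Q/\partial\boldsymbol u_{p,q}$, a pair $(\boldsymbol M(n,m,[\boldsymbol u]),\xi)$ is an extended symmetry, written $\partial_\tau\boldsymbol u_{0,0}=\boldsymbol M$, $\partial_\tau\alpha=\xi$, if $\mathrm Q_{(0,0)}\boldsymbol M+\mathrm Q_{(1,0)}\mathcal S(\boldsymbol M)+\mathrm Q_{(0,1)}\mathcal T(\boldsymbol M)+\mathrm Q_{(1,1)}\mathcal S\mathcal T(\boldsymbol M)+\xi\,\partial_\alpha\boldsymbol Q=\boldsymbol 0$ holds on all solutions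 of the system. *)

theory Defs
  imports "HOL-Analysis.Analysis"
begin

type_synonym field2 = "int \<Rightarrow> int \<Rightarrow> real \<times> real"
  (* w n m = (u(n,m), v(n,m)) *)

type_synonym qargs = "(real \<times> real) \<times> (real \<times> real) \<times> (real \<times> real) \<times> (real \<times> real) \<times> real"
  (* (u_{0,0}, u_{1,0}, u_{0,1}, u_{1,1}, alpha), each u_{p,q} = (u,v) *)

text \<open>The linearisation Q_(0,0) M + Q_(1,0) S M + Q_(0,1) T M + Q_(1,1) ST M + xi dQ/dalpha
  is the Frechet derivative of Q applied to the direction (M, SM, TM, STM, xi).\<close>
definition extended_symmetry_on ::
  "(real \<Rightarrow> field2 \<Rightarrow> bool) \<Rightarrow> (qargs \<Rightarrow> real \<times> real)
   \<Rightarrow> (int \<Rightarrow> int \<Rightarrow> field2 \<Rightarrow> real \<times> real) \<Rightarrow> real \<Rightarrow> bool" where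
  "extended_symmetry_on adm Q M \<xi> \<longleftrightarrow>
     (\<forall>\<alpha> w. adm \<alpha> w \<and>
        (\<forall>n m. Q (w n m, w (n+1) m, w n (m+1), w (n+1) (m+1), \<alpha>) = 0) \<longrightarrow>
        (\<forall>n m. \<exists>Q'. (Q has_derivative Q') (at (w n m, w (n+1) m, w n (m+1), w (n+1) (m+1), \<alpha>))
              \<and> Q' (M n m w, M (n+1) m w, M n (m+1) w, M (n+1) (m+1) w, \<xi>) = 0))"

definition sys_Q :: "real \<Rightarrow> qargs \<Rightarrow> real \<times> real" where
  "sys_Q \<beta> = (\<lambda>((u00, v00), (u10, v10), (u01, v01), (u11, v11), \<alpha>).
      ((u00 - u11) * (v10 - v01) - \<alpha> + \<beta>, (v00 - v11) * (u10 - u01) - \<alpha> + \<beta>))"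

definition sym_M :: "int \<Rightarrow> int \<Rightarrow> field2 \<Rightarrow> real \<times> real" where
  "sym_M n m w =
     (of_int n / (snd (w (n+1) m) - snd (w (n-1) m)),
      of_int n / (fst (w (n+1) m) - fst (w (n-1) m)))"

end

theory Submission
  imports Defs
begin

lemma key:
  fixes c n p0 q1 a1 b0 am1 qm1 b2 p2 :: real
  assumes c: "c \<noteq> 0"
    and e1: "(p0-q1)*(a1-b0) = c" and e2: "(am1-b0)*(p0-qm1) = c" and e3: "(a1-b2)*(p2-q1) = c"
    and d1: "a1 \<noteq> am1" and d2: "b2 \<noteq> b0" and d3: "p2 \<noteq> p0" and d4: "q1 \<noteq> qm1"
  shows "(n/(a1-am1) - (n+1)/(b2-b0))*(a1-b0) + (p0-q1)*((n+1)/(p2-p0) - n/(q1-qm1)) + 1 = 0"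
proof -
  have h1: "a1 - b0 \<noteq> 0" using e1 c by auto
  have h2: "am1 - b0 \<noteq> 0" using e2 c by auto
  have h3: "a1 - b2 \<noteq> 0" using e3 c by auto
  have pq: "p0 - q1 = c/(a1-b0)" using e1 h1 by (simp add: field_simps)
  have qm: "p0 - qm1 = c/(am1-b0)" using e2 h2 by (simp add: field_simps)
  have p2q: "p2 - q1 = c/(a1-b2)" using e3 h3 by (simp add: field_simps)
  have A: "(a1-b0)/(a1-am1) - (p0-q1)/(q1-qm1) = 1"
  proof -
    have "q1 - qm1 = c/(am1-b0) - c/(a1-b0)" using pq qm by (simp add: algebra_simps)
    also have "\<dots> = c*(a1-am1)/((am1-b0)*(a1-b0))" using h1 h2 by (simp add: field_simps)
    finally have eq: "q1 - qm1 = c*(a1-am1)/((am1-b0)*(a1-b0))" .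
    have x: "(p0-q1)*(a1-am1) = (am1-b0)*(q1-qm1)"
    proof -
      have "(am1-b0)*(q1-qm1) = (am1-b0)*((c*(a1-am1)/(a1-b0))/(am1-b0))"
        unfolding eq by (simp add: mult.commute)
      also have "\<dots> = c*(a1-am1)/(a1-b0)" using h2 by simp
      also have "\<dots> = (p0-q1)*(a1-am1)" unfolding pq by simp
      finally show ?thesis by simp
    qed
    have "(p0-q1)/(q1-qm1) = (am1-b0)/(a1-am1)"
      using x d1 d4 by (simp add: frac_eq_eq)
    then show ?thesis using d1 by (simp add: field_simps)
  qed
  have B: "(p0-q1)/(p2-p0) - (a1-b0)/(b2-b0) = -1"
  proof -
    have "p2 - p0 = c/(a1-b2) - c/(a1-b0)" using pq p2q by (simp add: algebra_simps)
    also have "\<dots> = c*(b2-b0)/((a1-b2)*(a1-b0))" using h1 h3 by (simp add: field_simps)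
    finally have eq: "p2 - p0 = c*(b2-b0)/((a1-b2)*(a1-b0))" .
    have x: "(p0-q1)*(b2-b0) = (a1-b2)*(p2-p0)"
    proof -
      have "(a1-b2)*(p2-p0) = (a1-b2)*((c*(b2-b0)/(a1-b0))/(a1-b2))"
        unfolding eq by (simp add: mult.commute)
      also have "\<dots> = c*(b2-b0)/(a1-b0)" using h3 by simp
      also have "\<dots> = (p0-q1)*(b2-b0)" unfolding pq by simp
      finally show ?thesis by simp
    qed
    have "(p0-q1)/(p2-p0) = (a1-b2)/(b2-b0)"
      using x d2 d3 by (simp add: frac_eq_eq)
    then show ?thesis using d2 by (simp add: field_simps)
  qed
  have "(n/(a1-am1) - (n+1)/(b2-b0))*(a1-b0) + (p0-q1)*((n+1)/(p2-p0) - n/(q1-qm1)) + 1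
     = n*((a1-b0)/(a1-am1) - (p0-q1)/(q1-qm1)) + (n+1)*((p0-q1)/(p2-p0) - (a1-b0)/(b2-b0)) + 1"
    by (simp add: algebra_simps)
  also have "\<dots> = 0" using A B by simp
  finally show ?thesis .
qed

lemma sysQ_deriv:
  "(sys_Q \<beta> has_derivative
     (\<lambda>((du00, dv00), (du10, dv10), (du01, dv01), (du11, dv11), da).
        ((du00 - du11) * (v10 - v01) + (u00 - u11) * (dv10 - dv01) - da,
         (dv00 - dv11) * (u10 - u01) + (v00 - v11) * (du10 - du01) - da)))
     (at ((u00, v00), (u10, v10), (u01, v01), (u11, v11), \<alpha>))"
proof -
  have e: "sys_Q \<beta> = (\<lambda>x. ((fst (fst x) - fst (fst (snd (snd (snd x))))) * (snd (fst (snd x)) - snd (fst (snd (snd x)))) - snd (snd (snd (snd x))) + \<beta>,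
     (snd (fst x) - snd (fst (snd (snd (snd x))))) * (fst (fst (snd x)) - fst (fst (snd (snd x)))) - snd (snd (snd (snd x))) + \<beta>))"
    by (auto simp: sys_Q_def fun_eq_iff split: prod.splits)
  show ?thesis unfolding e
    by (rule derivative_eq_intros refl | simp)+ (auto simp: fun_eq_iff algebra_simps split: prod.splits)
qed

theorem mainTheorem4:
  fixes \<beta> :: real
  shows "extended_symmetry_on
           (\<lambda>\<alpha> w. \<alpha> \<noteq> \<beta> \<and>
              (\<forall>n m. fst (w (n+1) m) \<noteq> fst (w (n-1) m) \<and> snd (w (n+1) m) \<noteq> snd (w (n-1) m)))
           (sys_Q \<beta>) sym_M (-1)"
  unfolding extended_symmetry_on_def
proof (intro allI impI)
  fix \<alpha> :: real and w :: field2 and n m :: int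
  assume H: "(\<alpha> \<noteq> \<beta> \<and> (\<forall>n m. fst (w (n+1) m) \<noteq> fst (w (n-1) m) \<and> snd (w (n+1) m) \<noteq> snd (w (n-1) m))) \<and>
        (\<forall>n m. sys_Q \<beta> (w n m, w (n+1) m, w n (m+1), w (n+1) (m+1), \<alpha>) = 0)"
  define u where "u i j = fst (w i j)" for i j
  define v where "v i j = snd (w i j)" for i j
  have wuv: "w i j = (u i j, v i j)" for i j by (simp add: u_def v_def)
  have c: "\<alpha> - \<beta> \<noteq> 0" using H by simp
  have du: "u (i+1) j \<noteq> u (i-1) j" and dv: "v (i+1) j \<noteq> v (i-1) j" for i j
    using H by (auto simp: u_def v_def)
  have Q: "(u i j - u (i+1) (j+1)) * (v (i+1) j - v i (j+1)) = \<alpha> - \<beta> \<and>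
           (v i j - v (i+1) (j+1)) * (u (i+1) j - u i (j+1)) = \<alpha> - \<beta>" for i j
  proof -
    have "sys_Q \<beta> (w i j, w (i+1) j, w i (j+1), w (i+1) (j+1), \<alpha>) = 0" using H by blast
    then show ?thesis unfolding wuv by (simp add: sys_Q_def prod_eq_iff algebra_simps)
  qed
  let ?D = "(\<lambda>((du00, dv00), (du10, dv10), (du01, dv01), (du11, dv11), da).
        ((du00 - du11) * (v (n+1) m - v n (m+1)) + (u n m - u (n+1) (m+1)) * (dv10 - dv01) - da,
         (dv00 - dv11) * (u (n+1) m - u n (m+1)) + (v n m - v (n+1) (m+1)) * (du10 - du01) - da)) :: qargs \<Rightarrow> real \<times> real"
  have D: "(sys_Q \<beta> has_derivative ?D) (at (w n m, w (n+1) m, w n (m+1), w (n+1) (m+1), \<alpha>))"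
    unfolding wuv by (rule sysQ_deriv)
  have k1: "(real_of_int n/(v (n+1) m - v (n-1) m) - (real_of_int n+1)/(v (n+2) (m+1) - v n (m+1)))*(v (n+1) m - v n (m+1))
     + (u n m - u (n+1) (m+1))*((real_of_int n+1)/(u (n+2) m - u n m) - real_of_int n/(u (n+1) (m+1) - u (n-1) (m+1))) + 1 = 0"
    apply (rule key[OF c])
    using Q[of n m] Q[of "n-1" m] Q[of "n+1" m] du[of n m] du[of "n+1" m] du[of n "m+1"] du[of "n+1" "m+1"]
      dv[of n m] dv[of "n+1" m] dv[of n "m+1"] dv[of "n+1" "m+1"]
    by (auto simp: algebra_simps)
  have k2: "(real_of_int n/(u (n+1) m - u (n-1) m) - (real_of_int n+1)/(u (n+2) (m+1) - u n (m+1)))*(u (n+1) m - u n (m+1))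
     + (v n m - v (n+1) (m+1))*((real_of_int n+1)/(v (n+2) m - v n m) - real_of_int n/(v (n+1) (m+1) - v (n-1) (m+1))) + 1 = 0"
    apply (rule key[OF c])
    using Q[of n m] Q[of "n-1" m] Q[of "n+1" m] du[of n m] du[of "n+1" m] du[of n "m+1"] du[of "n+1" "m+1"]
      dv[of n m] dv[of "n+1" m] dv[of n "m+1"] dv[of "n+1" "m+1"]
    by (auto simp: algebra_simps)
  have "?D (sym_M n m w, sym_M (n+1) m w, sym_M n (m+1) w, sym_M (n+1) (m+1) w, -1) = 0"
    using k1 k2 unfolding sym_M_def u_def[symmetric] v_def[symmetric]
    by (simp add: prod_eq_iff algebra_simps add_divide_distrib diff_divide_distrib)
  with D show "\<exists>Q'. (sys_Q \<beta> has_derivative Q') (at (w n m, w (n+1) m, w n (m+1), w (n+1) (m+1), \<alpha>))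
              \<and> Q' (sym_M n m w, sym_M (n+1) m w, sym_M n (m+1) w, sym_M (n+1) (m+1) w, -1) = 0" by blast
qed

end
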